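(* Let $p\in\mathbb{F}_2[x_1,\dots,x_n]$ be a uniformly chosen polynomial of degree $3$. Then the probability that there exists an affine subspace $A\subset\mathbb{F}_2^n$ of co-dimension at most $t=n-n^{3/4}$ such that $p$ restricted to $A$ has degree at most $2$ is at most $2^{-\Omega(n^2)}$.
   Context: Polynomials are taken as Boolean functions in algebraic normal form (sums of multilinear monomials). The restriction of $p$ to an affine subspace $A$ given by independent affine equations $\ell_1,\dots,\ell_{t'}$ is obtained by successively using each $\ell_j$ to eliminate one variable (substituting it by an affine expression in the others) and reducing to algebraic normal form; its degree does not depend on which variables are eliminated. *)

theory Defs
  imports Complex_Main
begin

text \<open>A point of F_2^n is encoded by its support, a subset of {..<n}.
A multilinear monomial is encoded by its set of variables. A Boolean polynomial in
algebraic normal form (over F_2, variables x_0..x_(n-1)) is a finite set of monomials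
(those with coefficient 1).\<close>

definition points :: "nat \<Rightarrow> nat set set" where
  "points n = Pow {..<n}"

definition eval_poly :: "nat set set \<Rightarrow> nat set \<Rightarrow> bool" where
  "eval_poly P x = odd (card {m \<in> P. m \<subseteq> x})"

definition polys_deg_le :: "nat \<Rightarrow> nat \<Rightarrow> nat set set set" where
  "polys_deg_le n d = Pow {m. m \<subseteq> {..<n} \<and> card m \<le> d}"

text \<open>Affine subspace of codimension at most k: nonempty solution set of
k affine equations  sum_{i in a j} x_i = b j  (mod 2).\<close>
definition affine_codim_le :: "nat \<Rightarrow> nat \<Rightarrow> nat set set \<Rightarrow> bool" where
  "affine_codim_le n k A \<longleftrightarrow> A \<noteq> {} \<and>
     (\<exists>a b. (\<forall>j<k. a j \<subseteq> {..<n}) \<and>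
        A = {x \<in> points n. \<forall>j<k. odd (card (a j \<inter> x)) = b j})"

text \<open>ANF coefficient of the monomial m of a Boolean function f on the cube over
free variables (Moebius inversion), and degree bound of a Boolean function on
the cube Pow S.\<close>
definition anf_coeff :: "(nat set \<Rightarrow> bool) \<Rightarrow> nat set \<Rightarrow> bool" where
  "anf_coeff f m = odd (card {y. y \<subseteq> m \<and> f y})"

definition fun_deg_le :: "nat set \<Rightarrow> (nat set \<Rightarrow> bool) \<Rightarrow> nat \<Rightarrow> bool" where
  "fun_deg_le S f d \<longleftrightarrow> (\<forall>m \<subseteq> S. d < card m \<longrightarrow> \<not> anf_coeff f m)"

text \<open>Restriction of P to A has degree at most d: eliminating the variables outside
a set S of free variables (each point of A is determined by its free coordinates,
the eliminated ones being affine in the free ones), the resulting function of the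
free variables has ANF degree at most d.  The degree does not depend on the choice
of S.\<close>
definition restr_deg_le :: "nat \<Rightarrow> nat set set \<Rightarrow> nat set set \<Rightarrow> nat \<Rightarrow> bool" where
  "restr_deg_le n P A d \<longleftrightarrow>
     (\<exists>S \<subseteq> {..<n}. (\<forall>y \<subseteq> S. \<exists>!x. x \<in> A \<and> x \<inter> S = y) \<and>
        fun_deg_le S (\<lambda>y. eval_poly P (THE x. x \<in> A \<and> x \<inter> S = y)) d)"

definition bad_cubics :: "nat \<Rightarrow> nat set set set" where
  "bad_cubics n = {P \<in> polys_deg_le n 3.
      \<exists>k A. real k \<le> real n - real n powr (3/4) \<and> affine_codim_le n k A \<and>
            restr_deg_le n P A 2}"

end

theory Submission
  imports Defs "HOL-Real_Asymp.Real_Asymp"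
begin


definition sd :: "'a set \<Rightarrow> 'a set \<Rightarrow> 'a set" where "sd X Y = (X - Y) \<union> (Y - X)"

lemma sd_assoc: "sd (sd A B) C = sd A (sd B C)" unfolding sd_def by blast
lemma sd_cancel: "sd (sd A B) B = A" unfolding sd_def by blast
lemma sd_empty_iff: "sd A B = {} \<longleftrightarrow> A = B" unfolding sd_def by blast

lemma odd_card_sd:
  assumes "finite A" "finite B"
  shows "odd (card (sd A B)) = (odd (card A) \<noteq> odd (card B))"
proof -
  have e: "sd A B = (A \<union> B) - (A \<inter> B)" unfolding sd_def by blast
  have c: "card (sd A B) = card (A \<union> B) - card (A \<inter> B)"
    unfolding e by (rule card_Diff_subset) (use assms in auto)
  have u: "card A + card B = card (A \<union> B) + card (A \<inter> B)"
    using card_Un_Int[OF assms] .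
  have le: "card (A \<inter> B) \<le> card (A \<union> B)"
    by (rule card_mono) (use assms in auto)
  have h: "card (sd A B) + 2 * card (A \<inter> B) = card A + card B"
    using c u le by linarith
  have "even (card (sd A B)) = even (card A + card B)" by (subst h[symmetric]) simp
  then show ?thesis by simp
qed

lemma eval_poly_sd:
  assumes "finite P" "finite Q"
  shows "eval_poly (sd P Q) x = (eval_poly P x \<noteq> eval_poly Q x)"
proof -
  have "{m \<in> sd P Q. m \<subseteq> x} = sd {m \<in> P. m \<subseteq> x} {m \<in> Q. m \<subseteq> x}" unfolding sd_def by blast
  moreover have "finite {m \<in> P. m \<subseteq> x}" "finite {m \<in> Q. m \<subseteq> x}" using assms by auto
  ultimately show ?thesis unfolding eval_poly_def by (simp add: odd_card_sd)
qed

lemma anf_xor: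
  assumes "finite m"
  shows "anf_coeff (\<lambda>y. f y \<noteq> g y) m = (anf_coeff f m \<noteq> anf_coeff g m)"
proof -
  have "{y. y \<subseteq> m \<and> (f y \<noteq> g y)} = sd {y. y \<subseteq> m \<and> f y} {y. y \<subseteq> m \<and> g y}"
    unfolding sd_def by blast
  moreover have "finite {y. y \<subseteq> m \<and> f y}" "finite {y. y \<subseteq> m \<and> g y}" using assms by auto
  ultimately show ?thesis unfolding anf_coeff_def by (simp add: odd_card_sd)
qed

lemma anf_cong:
  assumes "\<And>y. y \<subseteq> m \<Longrightarrow> f y = g y"
  shows "anf_coeff f m = anf_coeff g m"
proof -
  have "{y. y \<subseteq> m \<and> f y} = {y. y \<subseteq> m \<and> g y}" using assms by auto
  thus ?thesis unfolding anf_coeff_def by simp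
qed

lemma anf_cubic:
  assumes Q3: "\<forall>q\<in>Q. card q = 3" and m3: "card m = 3" and mQ: "m \<in> Q"
  shows "anf_coeff (eval_poly Q) m"
proof -
  have fm: "finite m" using m3 by (metis card.infinite zero_neq_numeral)
  have eq: "q = m" if "q \<in> Q" "q \<subseteq> m" for q
    using card_subset_eq[OF fm that(2)] Q3 m3 that(1) by auto
  have "{y. y \<subseteq> m \<and> eval_poly Q y} = {m}"
  proof (intro equalityI subsetI)
    fix y assume "y \<in> {y. y \<subseteq> m \<and> eval_poly Q y}"
    hence y: "y \<subseteq> m" "odd (card {q \<in> Q. q \<subseteq> y})" unfolding eval_poly_def by auto
    then have "{q \<in> Q. q \<subseteq> y} \<noteq> {}" by (metis card.empty even_zero)
    then obtain q where q: "q \<in> Q" "q \<subseteq> y" by auto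
    then have "q = m" using y(1) eq by blast
    thus "y \<in> {m}" using q y(1) by auto
  next
    fix y assume "y \<in> {m}"
    hence ym: "y = m" by simp
    have "{q \<in> Q. q \<subseteq> m} = {m}" using eq mQ by auto
    thus "y \<in> {y. y \<subseteq> m \<and> eval_poly Q y}" using ym unfolding eval_poly_def by auto
  qed
  thus ?thesis unfolding anf_coeff_def by simp
qed

definition valid_free :: "nat set set \<Rightarrow> nat set \<Rightarrow> bool" where
  "valid_free A S \<longleftrightarrow> (\<forall>y \<subseteq> S. \<exists>!x. x \<in> A \<and> x \<inter> S = y)"

lemma restr_low:
  assumes "valid_free A S" "y \<subseteq> S" "\<forall>q\<in>Q. q \<subseteq> S"
  shows "eval_poly Q (THE x. x \<in> A \<and> x \<inter> S = y) = eval_poly Q y"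
proof -
  define x where "x = (THE x. x \<in> A \<and> x \<inter> S = y)"
  have ex1: "\<exists>!x. x \<in> A \<and> x \<inter> S = y" using assms(1,2) unfolding valid_free_def by blast
  have "x \<in> A \<and> x \<inter> S = y" unfolding x_def by (rule theI'[OF ex1])
  hence "{q \<in> Q. q \<subseteq> x} = {q \<in> Q. q \<subseteq> y}" using assms(3) by blast
  hence "eval_poly Q x = eval_poly Q y" unfolding eval_poly_def by simp
  thus ?thesis unfolding x_def .
qed

definition Gs :: "nat \<Rightarrow> nat set set \<Rightarrow> nat set \<Rightarrow> nat set set set" where
 "Gs n A S = {P \<in> polys_deg_le n 3. fun_deg_le S (\<lambda>y. eval_poly P (THE x. x \<in> A \<and> x \<inter> S = y)) 2}"

lemma Gs_card:
  assumes S: "S \<subseteq> {..<n}" and V: "valid_free A S"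
  shows "card (Gs n A S) * 2 ^ (card S choose 3) \<le> card (polys_deg_le n 3)"
proof -
  define M where "M = {m. m \<subseteq> {..<n} \<and> card m \<le> 3}"
  define T where "T = {t. t \<subseteq> S \<and> card t = 3}"
  have finM: "finite M" unfolding M_def by (rule finite_subset[of _ "Pow {..<n}"]) auto
  have finS: "finite S" using S finite_subset by blast
  have TM: "T \<subseteq> M" unfolding T_def M_def using S by auto
  have finT: "finite T" using TM finM finite_subset by blast
  have cT: "card T = card S choose 3" unfolding T_def using finS by (simp add: n_subsets)
  have Pol: "polys_deg_le n 3 = Pow M" unfolding polys_deg_le_def M_def by simp
  have GM: "Gs n A S \<subseteq> Pow M" unfolding Gs_def Pol[symmetric] by auto
  define h where "h = (\<lambda>(P, Q). sd P (Q::nat set set))"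
  have key: "Q = {}" if P1: "P1 \<in> Gs n A S" and P2: "sd P1 Q \<in> Gs n A S" and QT: "Q \<subseteq> T" for P1 Q
  proof (rule ccontr)
    assume "Q \<noteq> {}"
    then obtain m where mQ: "m \<in> Q" by auto
    have mS: "m \<subseteq> S" and m3: "card m = 3" using mQ QT unfolding T_def by auto
    have finP1: "finite P1" using P1 GM finM finite_subset by blast
    have finQ: "finite Q" using QT finT finite_subset by blast
    have finm: "finite m" using mS finS finite_subset by blast
    let ?f1 = "\<lambda>y. eval_poly P1 (THE x. x \<in> A \<and> x \<inter> S = y)"
    let ?f2 = "\<lambda>y. eval_poly (sd P1 Q) (THE x. x \<in> A \<and> x \<inter> S = y)"
    have QS: "\<forall>q\<in>Q. q \<subseteq> S" using QT unfolding T_def by auto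
    have "anf_coeff ?f2 m = anf_coeff (\<lambda>y. ?f1 y \<noteq> eval_poly Q y) m"
    proof (rule anf_cong)
      fix y assume "y \<subseteq> m"
      hence yS: "y \<subseteq> S" using mS by auto
      show "?f2 y = (?f1 y \<noteq> eval_poly Q y)"
        using eval_poly_sd[OF finP1 finQ] restr_low[OF V yS QS] by simp
    qed
    also have "\<dots> = (anf_coeff ?f1 m \<noteq> anf_coeff (eval_poly Q) m)" by (rule anf_xor[OF finm])
    finally have a: "anf_coeff ?f2 m = (anf_coeff ?f1 m \<noteq> anf_coeff (eval_poly Q) m)" .
    have b: "anf_coeff (eval_poly Q) m" using anf_cubic[of Q m] QT m3 mQ unfolding T_def by auto
    have c: "\<not> anf_coeff ?f1 m" using P1 mS m3 unfolding Gs_def fun_deg_le_def by auto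
    have d: "\<not> anf_coeff ?f2 m" using P2 mS m3 unfolding Gs_def fun_deg_le_def by auto
    show False using a b c d by simp
  qed
  have inj: "inj_on h (Gs n A S \<times> Pow T)"
  proof (rule inj_onI)
    fix x y assume x: "x \<in> Gs n A S \<times> Pow T" and y: "y \<in> Gs n A S \<times> Pow T" and e: "h x = h y"
    obtain P1 Q1 where x': "x = (P1, Q1)" by (cases x)
    obtain P2 Q2 where y': "y = (P2, Q2)" by (cases y)
    have e': "sd P1 Q1 = sd P2 Q2" using e x' y' h_def by simp
    have "P2 = sd P1 (sd Q1 Q2)" by (metis e' sd_cancel sd_assoc)
    moreover have "sd Q1 Q2 \<subseteq> T" using x y x' y' unfolding sd_def by auto
    ultimately have "sd Q1 Q2 = {}" using key[of P1 "sd Q1 Q2"] x y x' y' by auto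
    then have "Q1 = Q2" by (simp add: sd_empty_iff)
    with e' have "P1 = P2" by (metis sd_cancel)
    with \<open>Q1 = Q2\<close> show "x = y" using x' y' by simp
  qed
  have "h ` (Gs n A S \<times> Pow T) \<subseteq> Pow M"
    using GM TM unfolding h_def sd_def by auto
  hence "card (Gs n A S \<times> Pow T) \<le> card (Pow M)"
    using card_inj_on_le[OF inj] finM by auto
  moreover have "card (Gs n A S \<times> Pow T) = card (Gs n A S) * 2 ^ (card S choose 3)"
    using finT by (simp add: card_cartesian_product card_Pow cT)
  ultimately show ?thesis using Pol by simp
qed



lemma ex1_same: "\<exists>!x. P x \<Longrightarrow> P a \<Longrightarrow> P b \<Longrightarrow> a = b" by blast

lemma dim_bound:
  assumes a: "\<forall>j<k. a j \<subseteq> {..<n}"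
    and A: "A = {x \<in> points n. \<forall>j<k. odd (card (a j \<inter> x)) = b j}"
    and ne: "A \<noteq> {}" and S: "S \<subseteq> {..<n}" and V: "valid_free A S"
  shows "n \<le> card S + k"
proof -
  have finS: "finite S" using S finite_subset by blast
  have AP: "A \<subseteq> Pow {..<n}" using A unfolding points_def by blast
  have finA: "finite A" using AP finite_subset by blast
  have allV: "\<forall>y\<subseteq>S. \<exists>!x. x \<in> A \<and> x \<inter> S = y" using V unfolding valid_free_def .
  have bij: "bij_betw (\<lambda>x. x \<inter> S) A (Pow S)"
  proof (rule bij_betw_imageI)
    show "inj_on (\<lambda>x. x \<inter> S) A"
    proof (rule inj_onI)
      fix x1 x2 assume x: "x1 \<in> A" "x2 \<in> A" "x1 \<inter> S = x2 \<inter> S"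
      have sub: "x1 \<inter> S \<subseteq> S" by blast
      have "\<exists>!x. x \<in> A \<and> x \<inter> S = x1 \<inter> S"
        using allV[rule_format, OF sub] .
      thus "x1 = x2" by (rule ex1_same) (use x in auto)
    qed
    show "(\<lambda>x. x \<inter> S) ` A = Pow S"
    proof (intro equalityI subsetI)
      fix y assume "y \<in> Pow S"
      hence yS: "y \<subseteq> S" by simp
      have "\<exists>!x. x \<in> A \<and> x \<inter> S = y"
        using allV[rule_format, OF yS] .
      hence "\<exists>x. x \<in> A \<and> x \<inter> S = y" by (rule ex1_implies_ex)
      then obtain x where "x \<in> A" "x \<inter> S = y" by blast
      thus "y \<in> (\<lambda>x. x \<inter> S) ` A" by blast
    qed auto
  qed
  have cA: "card A = 2 ^ card S"
    using bij_betw_same_card[OF bij] card_Pow[of S] finS by simp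
  obtain x0 where x0: "x0 \<in> A" using ne by auto
  define \<phi> where "\<phi> = (\<lambda>x. {j. j < k \<and> odd (card (a j \<inter> x))})"
  define c where "c = (\<lambda>v. SOME z. z \<in> points n \<and> \<phi> z = v)"
  define \<psi> where "\<psi> = (\<lambda>x. (sd (sd x (c (\<phi> x))) x0, \<phi> x))"
  have par: "odd (card (a j \<inter> sd x y)) = (odd (card (a j \<inter> x)) \<noteq> odd (card (a j \<inter> y)))"
    if "j < k" for j x y
  proof -
    have "a j \<inter> sd x y = sd (a j \<inter> x) (a j \<inter> y)" unfolding sd_def by blast
    moreover have "finite (a j)" using a that finite_subset by blast
    ultimately show ?thesis by (simp add: odd_card_sd)
  qed
  have cx: "c (\<phi> x) \<in> points n \<and> \<phi> (c (\<phi> x)) = \<phi> x" if "x \<in> points n" for x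
    unfolding c_def by (rule someI[of _ x]) (use that in auto)
  have maps: "\<psi> x \<in> A \<times> Pow {..<k}" if xp: "x \<in> points n" for x
  proof -
    let ?c = "c (\<phi> x)"
    have cp: "?c \<in> points n" and ce: "\<phi> ?c = \<phi> x" using cx[OF xp] by auto
    have x0p: "x0 \<in> points n" and x0b: "\<forall>j<k. odd (card (a j \<inter> x0)) = b j" using x0 A by auto
    have u1: "sd (sd x ?c) x0 \<in> points n"
      using xp cp x0p unfolding points_def sd_def by auto
    have u2: "odd (card (a j \<inter> sd (sd x ?c) x0)) = b j" if "j < k" for j
    proof -
      have "odd (card (a j \<inter> ?c)) = odd (card (a j \<inter> x))"
        using ce that unfolding \<phi>_def set_eq_iff by blast
      moreover have "odd (card (a j \<inter> sd (sd x ?c) x0)) = (odd (card (a j \<inter> sd x ?c)) \<noteq> odd (card (a j \<inter> x0)))"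
        by (rule par[OF that])
      moreover have "odd (card (a j \<inter> sd x ?c)) = (odd (card (a j \<inter> x)) \<noteq> odd (card (a j \<inter> ?c)))"
        by (rule par[OF that])
      ultimately show ?thesis using x0b that by (simp only:) simp
    qed
    have "sd (sd x ?c) x0 \<in> A" using u1 u2 A by blast
    moreover have "\<phi> x \<in> Pow {..<k}" unfolding \<phi>_def by auto
    ultimately show ?thesis unfolding \<psi>_def by simp
  qed
  have inj: "inj_on \<psi> (points n)"
  proof (rule inj_onI)
    fix x1 x2 assume "x1 \<in> points n" "x2 \<in> points n" and e: "\<psi> x1 = \<psi> x2"
    have e1: "\<phi> x1 = \<phi> x2" using e unfolding \<psi>_def by simp
    have "sd (sd x1 (c (\<phi> x1))) x0 = sd (sd x2 (c (\<phi> x1))) x0" using e e1 unfolding \<psi>_def by simp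
    thus "x1 = x2" by (metis sd_cancel)
  qed
  have "card (points n) \<le> card (A \<times> Pow {..<k})"
  proof (rule card_inj_on_le[OF inj])
    show "\<psi> ` points n \<subseteq> A \<times> Pow {..<k}" using maps by (rule image_subsetI)
    show "finite (A \<times> Pow {..<k})" using finA by simp
  qed
  hence "2 ^ n \<le> 2 ^ card S * (2::nat) ^ k"
    by (simp add: points_def card_Pow card_cartesian_product cA)
  hence "(2::nat) ^ n \<le> 2 ^ (card S + k)" by (simp add: power_add)
  thus ?thesis by (rule power_le_imp_le_exp[rotated]) simp
qed

definition AL :: "nat \<Rightarrow> (nat set \<times> bool) list \<Rightarrow> nat set set" where
  "AL n L = {x \<in> points n. \<forall>p \<in> set L. odd (card (fst p \<inter> x)) = snd p}"

lemma affine_as_list: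
  assumes "k \<le> n"
  shows "{x \<in> points n. \<forall>j<k. odd (card (a j \<inter> x)) = b j}
       = AL n (map (\<lambda>j. if j < k then (a j, b j) else ({}, False)) [0..<n])"
  unfolding AL_def
proof (intro Collect_cong conj_cong refl)
  fix x
  let ?f = "\<lambda>j. if j < k then (a j, b j) else ({}, False)"
  show "(\<forall>j<k. odd (card (a j \<inter> x)) = b j) =
        (\<forall>p\<in>set (map ?f [0..<n]). odd (card (fst p \<inter> x)) = snd p)"
  proof
    assume h: "\<forall>j<k. odd (card (a j \<inter> x)) = b j"
    show "\<forall>p\<in>set (map ?f [0..<n]). odd (card (fst p \<inter> x)) = snd p"
      using h by auto
  next
    assume h: "\<forall>p\<in>set (map ?f [0..<n]). odd (card (fst p \<inter> x)) = snd p"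
    show "\<forall>j<k. odd (card (a j \<inter> x)) = b j"
    proof (intro allI impI)
      fix j assume j: "j < k"
      hence "?f j \<in> set (map ?f [0..<n])" using assms by auto
      thus "odd (card (a j \<inter> x)) = b j" using h j by fastforce
    qed
  qed
qed

lemma choose2: "real (s choose 2) * 2 = real s * (real s - 1)"
proof (induction s)
  case 0 then show ?case by simp
next
  case (Suc s)
  have "Suc s choose 2 = (s choose 1) + (s choose 2)"
    by (simp add: numeral_2_eq_2)
  then show ?case using Suc by (simp add: algebra_simps)
qed

lemma choose3: "real (s choose 3) * 6 = real s * (real s - 1) * (real s - 2)"
proof (induction s)
  case 0 then show ?case by simp
next
  case (Suc s)
  have "Suc s choose 3 = (s choose 2) + (s choose 3)"
    by (simp add: numeral_3_eq_3 numeral_2_eq_2)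
  hence "real (Suc s choose 3) * 6 = 3 * (real (s choose 2) * 2) + real (s choose 3) * 6"
    by simp
  also have "\<dots> = real (Suc s) * (real (Suc s) - 1) * (real (Suc s) - 2)"
    using Suc choose2[of s] by (simp add: algebra_simps)
  finally show ?case .
qed



lemma choose3_lb:
  fixes s :: nat and t :: real
  assumes "2 \<le> t" "t \<le> real s"
  shows "(t - 2)^3 / 6 \<le> real (s choose 3)"
proof -
  have "(t - 2)^3 \<le> (real s - 2)^3"
    by (rule power_mono) (use assms in auto)
  also have "\<dots> = (real s - 2) * (real s - 2) * (real s - 2)" by (simp add: power3_eq_cube)
  also have "\<dots> \<le> real s * (real s - 1) * (real s - 2)"
  proof -
    have h: "0 \<le> real s - 2" using assms by linarith
    have "(real s - 2) * (real s - 2) \<le> real s * (real s - 1)"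
      by (rule mult_mono) (use h in auto)
    thus ?thesis using h by (rule mult_right_mono)
  qed
  also have "\<dots> = real (s choose 3) * 6" by (rule choose3[symmetric])
  finally show ?thesis by simp
qed

lemma main_bound:
  fixes n :: nat
  assumes h1: "2 \<le> real n powr (3/4)"
    and h2: "2 * (real n)^2 + 2 * real n \<le> (real n powr (3/4) - 2)^3/6"
  shows "real (card (bad_cubics n)) / real (card (polys_deg_le n 3)) \<le> 2 powr (- 1 * (real n)^2)"
proof -
  define g where "g = (real n powr (3/4) - 2)^3/6"
  define Ls where "Ls = {L. set L \<subseteq> Pow {..<n} \<times> (UNIV :: bool set) \<and> length L = n}"
  define Par where "Par = {(L, S). L \<in> Ls \<and> S \<subseteq> {..<n} \<and> valid_free (AL n L) S
                          \<and> real n powr (3/4) \<le> real (card S)}"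
  define Pol where "Pol = polys_deg_le n 3"
  define M where "M = {m. m \<subseteq> {..<n} \<and> card m \<le> 3}"
  have finM: "finite M" unfolding M_def by (rule finite_subset[of _ "Pow {..<n}"]) auto
  have PolM: "Pol = Pow M" unfolding Pol_def polys_deg_le_def M_def by simp
  have finPol: "finite Pol" using finM PolM by simp
  have "{} \<in> Pol" using PolM by simp
  hence Polpos: "0 < card Pol" using finPol by (auto simp: card_gt_0_iff)
  have finLs: "finite Ls" unfolding Ls_def by (rule finite_lists_length_eq) simp
  have cLs: "card Ls = (2 ^ n * 2) ^ n" unfolding Ls_def
    by (subst card_lists_length_eq) (simp_all add: card_cartesian_product card_Pow)
  have ParLs: "Par \<subseteq> Ls \<times> Pow {..<n}" unfolding Par_def by auto
  have finPar: "finite Par" using ParLs finLs finite_subset by (metis finite_Pow_iff finite_SigmaI finite_lessThan)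
  have cPar: "card Par \<le> (2 ^ n * 2) ^ n * 2 ^ n"
  proof -
    have "card Par \<le> card (Ls \<times> Pow {..<n})" by (rule card_mono) (use ParLs finLs in auto)
    thus ?thesis by (simp add: card_cartesian_product card_Pow cLs)
  qed
  have sub: "bad_cubics n \<subseteq> (\<Union>p\<in>Par. Gs n (AL n (fst p)) (snd p))"
  proof
    fix P assume "P \<in> bad_cubics n"
    then obtain k A where PP: "P \<in> polys_deg_le n 3" and hk: "real k \<le> real n - real n powr (3/4)"
      and aff: "affine_codim_le n k A" and rd: "restr_deg_le n P A 2"
      unfolding bad_cubics_def by blast
    from aff obtain a b where ne: "A \<noteq> {}" and a: "\<forall>j<k. a j \<subseteq> {..<n}"
      and Aeq: "A = {x \<in> points n. \<forall>j<k. odd (card (a j \<inter> x)) = b j}"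
      unfolding affine_codim_le_def by blast
    from rd obtain S where S: "S \<subseteq> {..<n}" and V: "valid_free A S"
      and fd: "fun_deg_le S (\<lambda>y. eval_poly P (THE x. x \<in> A \<and> x \<inter> S = y)) 2"
      unfolding restr_deg_le_def valid_free_def by blast
    have "0 \<le> real n powr (3/4)" by simp
    hence kn: "k \<le> n" using hk by linarith
    define L where "L = map (\<lambda>j. if j < k then (a j, b j) else ({}, False)) [0..<n]"
    have AL: "A = AL n L" unfolding L_def Aeq by (rule affine_as_list[OF kn])
    have LLs: "L \<in> Ls" unfolding Ls_def L_def using a by auto
    have "n \<le> card S + k" by (rule dim_bound[OF a Aeq ne S V])
    hence cS: "real n powr (3/4) \<le> real (card S)" using hk by linarith
    have "(L, S) \<in> Par" unfolding Par_def using LLs S V AL cS by auto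
    moreover have "P \<in> Gs n (AL n L) S" unfolding Gs_def using PP fd AL by auto
    ultimately show "P \<in> (\<Union>p\<in>Par. Gs n (AL n (fst p)) (snd p))" by force
  qed
  have each: "real (card (Gs n (AL n (fst p)) (snd p))) \<le> real (card Pol) * 2 powr (- g)"
    if p: "p \<in> Par" for p
  proof -
    obtain L S where pLS: "p = (L, S)" by (cases p)
    have S: "S \<subseteq> {..<n}" and V: "valid_free (AL n L) S" and cS: "real n powr (3/4) \<le> real (card S)"
      using p pLS unfolding Par_def by auto
    have c1: "card (Gs n (AL n L) S) * 2 ^ (card S choose 3) \<le> card Pol"
      unfolding Pol_def by (rule Gs_card[OF S V])
    have gle: "g \<le> real (card S choose 3)" unfolding g_def
      by (rule choose3_lb[OF h1 cS])
    have "2 powr g \<le> 2 powr real (card S choose 3)" using gle by simp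
    also have "\<dots> = 2 ^ (card S choose 3)" by (simp add: powr_realpow)
    finally have e: "2 powr g \<le> 2 ^ (card S choose 3)" .
    have "real (card (Gs n (AL n L) S)) * 2 powr g \<le> real (card (Gs n (AL n L) S)) * 2 ^ (card S choose 3)"
      using e by (simp add: mult_left_mono)
    also have "\<dots> \<le> real (card Pol)" using c1 by (metis of_nat_le_iff of_nat_mult of_nat_numeral of_nat_power)
    finally have "real (card (Gs n (AL n L) S)) * 2 powr g \<le> real (card Pol)" .
    hence "real (card (Gs n (AL n L) S)) \<le> real (card Pol) / 2 powr g"
      by (simp add: field_simps)
    thus ?thesis using pLS by (simp add: powr_minus_divide)
  qed
  have "real (card (bad_cubics n)) \<le> real (card (\<Union>p\<in>Par. Gs n (AL n (fst p)) (snd p)))"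
  proof -
    have "(\<Union>p\<in>Par. Gs n (AL n (fst p)) (snd p)) \<subseteq> Pol" unfolding Gs_def Pol_def by auto
    hence "finite (\<Union>p\<in>Par. Gs n (AL n (fst p)) (snd p))" using finPol finite_subset by blast
    thus ?thesis using card_mono[OF _ sub] by simp
  qed
  also have "\<dots> \<le> real (\<Sum>p\<in>Par. card (Gs n (AL n (fst p)) (snd p)))"
    using card_UN_le[OF finPar] by (simp only: of_nat_le_iff)
  also have "\<dots> = (\<Sum>p\<in>Par. real (card (Gs n (AL n (fst p)) (snd p))))" by simp
  also have "\<dots> \<le> (\<Sum>p\<in>Par. real (card Pol) * 2 powr (- g))" by (rule sum_mono) (rule each)
  also have "\<dots> = real (card Par) * (real (card Pol) * 2 powr (- g))" by simp
  also have "\<dots> \<le> real ((2 ^ n * 2) ^ n * 2 ^ n) * (real (card Pol) * 2 powr (- g))"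
    by (rule mult_right_mono[OF of_nat_le_iff[THEN iffD2, OF cPar]]) simp
  also have "real ((2 ^ n * 2) ^ n * 2 ^ n :: nat) = 2 powr ((real n)^2 + 2 * real n)"
  proof -
    have "(2 ^ n * 2) ^ n * 2 ^ n = (2::nat) ^ (n * n + 2 * n)"
      by (simp only: power_add power_mult_distrib power_mult mult_2 power_one_right mult.assoc)
    hence "real ((2 ^ n * 2) ^ n * 2 ^ n :: nat) = (2::real) ^ (n * n + 2 * n)"
      by (metis of_nat_numeral of_nat_power)
    also have "\<dots> = 2 powr real (n * n + 2 * n)"
      by (rule powr_realpow[symmetric]) simp
    also have "real (n * n + 2 * n) = (real n)^2 + 2 * real n"
      by (simp add: power2_eq_square)
    finally show ?thesis .
  qed
  finally have b: "real (card (bad_cubics n)) \<le> 2 powr ((real n)^2 + 2 * real n) * 2 powr (- g) * real (card Pol)"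
    by (simp add: algebra_simps)
  have "2 powr ((real n)^2 + 2 * real n) * 2 powr (- g) = 2 powr ((real n)^2 + 2 * real n - g)"
    by (simp add: powr_add[symmetric])
  also have "\<dots> \<le> 2 powr (- 1 * (real n)^2)" using h2 unfolding g_def by simp
  finally have q: "2 powr ((real n)^2 + 2 * real n) * 2 powr (- g) \<le> 2 powr (- 1 * (real n)^2)" .
  have "2 powr ((real n)^2 + 2 * real n) * 2 powr (- g) * real (card Pol) \<le> 2 powr (- 1 * (real n)^2) * real (card Pol)"
    by (rule mult_right_mono[OF q]) simp
  with b have "real (card (bad_cubics n)) \<le> 2 powr (- 1 * (real n)^2) * real (card Pol)"
    by (rule order_trans)
  thus ?thesis using Polpos unfolding Pol_def by (simp add: divide_le_eq)
qed

theorem mainTheorem10: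
  shows "\<exists>c>0. \<exists>N. \<forall>n\<ge>N.
     real (card (bad_cubics n)) / real (card (polys_deg_le n 3)) \<le> 2 powr (- c * (real n)^2)"
proof -
  have ev1: "eventually (\<lambda>x::real. 2 \<le> x powr (3/4)) at_top" by real_asymp
  have ev2: "eventually (\<lambda>x::real. 2*x^2 + 2*x \<le> (x powr (3/4) - 2)^3/6) at_top" by real_asymp
  obtain X :: real where X: "\<And>x. x \<ge> X \<Longrightarrow> 2 \<le> x powr (3/4) \<and> 2*x^2 + 2*x \<le> (x powr (3/4) - 2)^3/6"
    using eventually_conj[OF ev1 ev2] unfolding eventually_at_top_linorder by blast
  have "\<forall>n\<ge>nat \<lceil>X\<rceil>. real (card (bad_cubics n)) / real (card (polys_deg_le n 3)) \<le> 2 powr (- 1 * (real n)^2)"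
  proof (intro allI impI)
    fix n :: nat assume "nat \<lceil>X\<rceil> \<le> n"
    hence "X \<le> real n" by linarith
    from X[OF this] show "real (card (bad_cubics n)) / real (card (polys_deg_le n 3)) \<le> 2 powr (- 1 * (real n)^2)"
      by (intro main_bound) auto
  qed
  hence "\<exists>N. \<forall>n\<ge>N. real (card (bad_cubics n)) / real (card (polys_deg_le n 3)) \<le> 2 powr (- 1 * (real n)^2)"
    by (rule exI)
  thus ?thesis by (intro exI[of _ "1::real"] conjI) simp_all
qed

end
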